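(* Let $G=(V,E)$ be a control flow graph, let $p$ be a predicate node with successors $s_1,s_2$ in $G$ and with at least two successors in $A_p$, and let $i\in\{1,2\}$. For each maximal path from $s_i$ in $G$ there exists a maximal path in $A_p$ starting from a node of $V_i$ with the same order of the first occurrences of all nodes from $V_p\setminus\{p\}$, and vice versa (for each maximal path in $A_p$ starting from a node of $V_i$ there exists a maximal path from $s_i$ in $G$ with the same order of the first occurrences of all nodes from $V_p\setminus\{p\}$).
   Context: A control flow graph (CFG) is a finite directed graph $G=(V,E)$ in which every node has at most two outgoing edges; nodes with exactly two outgoing edges are predicate nodes. A path from $n_1$ is a nonempty finite or infinite sequence of nodes with each adjacent pair an edge; it is maximal if it is infinite or its last node has no successor. $V_p$ is the set of nodes occurring on all maximal paths from $p$ in $G$. For $V'\subseteq V$, a $V'$-interval from $x$ to $y$ is a finite path $n_1\ldots n_k$ in $G$ with $k\ge 2$, $n_1=x\in V'$, $n_k=y\in V'$, and $n_i\notin V'$ for $1<i<k$. $A_p$ is the directed graph with node set $V_p$ and an edge $(x,y)$ iff there is a $V_p$-interval from $x$ to $y$ in $G$. For $i\in\{1,2\}$, $V_i$ is the set of nodes $n\in V_p$ such that there is a finite path in $G$ from $s_i$ to $n$ whose nodes other than the last one all lie outside $V_p$ (i.e., a path $s_i\ldots n\in (V\setminus V_p)^*.V_p$; possibly $n=s_i$). *)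

theory Defs
  imports Main
begin

datatype 'a path = FinP "'a list" | InfP "nat \<Rightarrow> 'a"

definition succs :: "('a \<times> 'a) set \<Rightarrow> 'a \<Rightarrow> 'a set" where
  "succs E n = {m. (n, m) \<in> E}"

definition cfg :: "'a set \<Rightarrow> ('a \<times> 'a) set \<Rightarrow> bool" where
  "cfg V E \<longleftrightarrow> finite V \<and> E \<subseteq> V \<times> V \<and> (\<forall>n\<in>V. card (succs E n) \<le> 2)"

fun valid_idx :: "'a path \<Rightarrow> nat \<Rightarrow> bool" where
  "valid_idx (FinP xs) i = (i < length xs)"
| "valid_idx (InfP f) i = True"

fun at :: "'a path \<Rightarrow> nat \<Rightarrow> 'a" where
  "at (FinP xs) i = xs ! i"
| "at (InfP f) i = f i"

definition is_path :: "'a set \<Rightarrow> ('a \<times> 'a) set \<Rightarrow> 'a path \<Rightarrow> bool" where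
  "is_path V E \<pi> \<longleftrightarrow> valid_idx \<pi> 0 \<and> (\<forall>i. valid_idx \<pi> i \<longrightarrow> at \<pi> i \<in> V)
     \<and> (\<forall>i. valid_idx \<pi> (Suc i) \<longrightarrow> (at \<pi> i, at \<pi> (Suc i)) \<in> E)"

fun maximal_end :: "('a \<times> 'a) set \<Rightarrow> 'a path \<Rightarrow> bool" where
  "maximal_end E (FinP xs) = (succs E (last xs) = {})"
| "maximal_end E (InfP f) = True"

definition maximal_path :: "'a set \<Rightarrow> ('a \<times> 'a) set \<Rightarrow> 'a path \<Rightarrow> bool" where
  "maximal_path V E \<pi> \<longleftrightarrow> is_path V E \<pi> \<and> maximal_end E \<pi>"

definition pnodes :: "'a path \<Rightarrow> 'a set" where
  "pnodes \<pi> = {at \<pi> i | i. valid_idx \<pi> i}"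

definition Vp :: "'a set \<Rightarrow> ('a \<times> 'a) set \<Rightarrow> 'a \<Rightarrow> 'a set" where
  "Vp V E p = {n \<in> V. \<forall>\<pi>. maximal_path V E \<pi> \<and> at \<pi> 0 = p \<longrightarrow> n \<in> pnodes \<pi>}"

definition interval :: "'a set \<Rightarrow> ('a \<times> 'a) set \<Rightarrow> 'a set \<Rightarrow> 'a list \<Rightarrow> 'a \<Rightarrow> 'a \<Rightarrow> bool" where
  "interval V E V' xs x y \<longleftrightarrow> is_path V E (FinP xs) \<and> length xs \<ge> 2 \<and>
     hd xs = x \<and> x \<in> V' \<and> last xs = y \<and> y \<in> V' \<and>
     (\<forall>i. 0 < i \<and> i < length xs - 1 \<longrightarrow> xs ! i \<notin> V')"

text \<open>Edges of A_p (its node set is Vp V E p).\<close>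
definition Ap_edges :: "'a set \<Rightarrow> ('a \<times> 'a) set \<Rightarrow> 'a \<Rightarrow> ('a \<times> 'a) set" where
  "Ap_edges V E p = {(x, y). \<exists>xs. interval V E (Vp V E p) xs x y}"

definition Vi :: "'a set \<Rightarrow> ('a \<times> 'a) set \<Rightarrow> 'a \<Rightarrow> 'a \<Rightarrow> 'a set" where
  "Vi V E p s = {n \<in> Vp V E p. \<exists>xs. is_path V E (FinP xs) \<and> hd xs = s \<and> last xs = n \<and>
      (\<forall>x\<in>set (butlast xs). x \<notin> Vp V E p)}"

definition first_idx :: "'a path \<Rightarrow> 'a \<Rightarrow> nat" where
  "first_idx \<pi> x = (LEAST i. valid_idx \<pi> i \<and> at \<pi> i = x)"

definition fo_order :: "'a set \<Rightarrow> 'a path \<Rightarrow> 'a set \<times> ('a \<times> 'a) set" where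
  "fo_order W \<pi> = (W \<inter> pnodes \<pi>,
     {(x, y). x \<in> W \<inter> pnodes \<pi> \<and> y \<in> W \<inter> pnodes \<pi> \<and> first_idx \<pi> x < first_idx \<pi> y})"

end

theory Submission
  imports Defs
begin


definition lpath :: "'a set \<Rightarrow> ('a \<times> 'a) set \<Rightarrow> 'a list \<Rightarrow> bool" where
  "lpath V E xs \<longleftrightarrow> xs \<noteq> [] \<and> set xs \<subseteq> V \<and> successively (\<lambda>x y. (x,y) \<in> E) xs"

lemma is_path_FinP: "is_path V E (FinP xs) \<longleftrightarrow> lpath V E xs"
  unfolding is_path_def lpath_def successively_conv_nth
  by (auto simp: set_conv_nth)

fun preP :: "'a list \<Rightarrow> 'a path \<Rightarrow> 'a path" where
  "preP as (FinP ys) = FinP (as @ ys)"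
| "preP as (InfP f) = InfP (\<lambda>i. if i < length as then as ! i else f (i - length as))"

lemma preP_at1: "i < length as \<Longrightarrow> valid_idx (preP as \<sigma>) i \<and> at (preP as \<sigma>) i = as ! i"
  by (cases \<sigma>) (auto simp: nth_append)

lemma preP_at2: "valid_idx \<sigma> j \<Longrightarrow> valid_idx (preP as \<sigma>) (length as + j) \<and> at (preP as \<sigma>) (length as + j) = at \<sigma> j"
  by (cases \<sigma>) (auto simp: nth_append)

lemma pnodes_FinP[simp]: "pnodes (FinP xs) = set xs"
  unfolding pnodes_def by (simp add: set_conv_nth)

lemma preP_pnodes: "pnodes (preP as \<sigma>) = set as \<union> pnodes \<sigma>"
proof (cases \<sigma>)
  case (FinP ys)
  then show ?thesis by simp
next
  case (InfP f)
  show ?thesis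
  proof
    show "pnodes (preP as \<sigma>) \<subseteq> set as \<union> pnodes \<sigma>"
    proof
      fix x assume "x \<in> pnodes (preP as \<sigma>)"
      then obtain i where i: "x = at (preP as \<sigma>) i" by (auto simp: pnodes_def)
      show "x \<in> set as \<union> pnodes \<sigma>"
      proof (cases "i < length as")
        case True then show ?thesis using i InfP by simp
      next
        case False then show ?thesis using i InfP unfolding pnodes_def by simp blast
      qed
    qed
    show "set as \<union> pnodes \<sigma> \<subseteq> pnodes (preP as \<sigma>)"
    proof
      fix x assume "x \<in> set as \<union> pnodes \<sigma>"
      then show "x \<in> pnodes (preP as \<sigma>)"
      proof
        assume "x \<in> set as" then obtain i where "i < length as" "x = as ! i" by (auto simp: in_set_conv_nth)
        then show ?thesis using preP_at1[of i as \<sigma>] unfolding pnodes_def by (smt (verit) mem_Collect_eq)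
      next
        assume "x \<in> pnodes \<sigma>" then obtain j where "valid_idx \<sigma> j" "x = at \<sigma> j" by (auto simp: pnodes_def)
        then show ?thesis using preP_at2[of \<sigma> j as] unfolding pnodes_def by (smt (verit) mem_Collect_eq)
      qed
    qed
  qed
qed

lemma preP_max:
  assumes "maximal_path V E \<sigma>" "set as \<subseteq> V" "successively (\<lambda>x y. (x,y) \<in> E) (as @ [at \<sigma> 0])"
  shows "maximal_path V E (preP as \<sigma>)"
proof (cases \<sigma>)
  case (FinP ys)
  with assms have ys: "lpath V E ys" "succs E (last ys) = {}" by (auto simp: maximal_path_def is_path_FinP)
  then have "ys \<noteq> []" "at \<sigma> 0 = hd ys" using FinP by (auto simp: lpath_def hd_conv_nth)
  then have "lpath V E (as @ ys)" using ys assms(2,3) unfolding lpath_def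
    by (auto simp: successively_append_iff)
  then show ?thesis using FinP ys \<open>ys \<noteq> []\<close> by (auto simp: maximal_path_def is_path_FinP)
next
  case (InfP f)
  have f: "\<forall>i. f i \<in> V" "\<forall>i. (f i, f (Suc i)) \<in> E" using assms(1) InfP by (auto simp: maximal_path_def is_path_def)
  have s: "\<forall>i. Suc i < length (as @ [f 0]) \<longrightarrow> ((as @ [f 0]) ! i, (as @ [f 0]) ! Suc i) \<in> E"
    using assms(3) InfP by (simp add: successively_conv_nth)
  have "(at (preP as \<sigma>) i, at (preP as \<sigma>) (Suc i)) \<in> E" for i
  proof -
    consider "Suc i < length as" | "Suc i = length as" | "Suc i > length as" by linarith
    then show ?thesis
    proof cases
      case 1 then show ?thesis using s[rule_format, of i] InfP by (auto simp: nth_append)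
    next
      case 2 then show ?thesis using s[rule_format, of i] InfP by (auto simp: nth_append)
    next
      case 3 then have "Suc i - length as = Suc (i - length as)" by auto
      then show ?thesis using 3 f InfP by auto
    qed
  qed
  moreover have "at (preP as \<sigma>) i \<in> V" for i using f assms(2) InfP by auto
  ultimately show ?thesis using InfP by (auto simp: maximal_path_def is_path_def)
qed



lemma valid_mono: "valid_idx \<sigma> k \<Longrightarrow> i \<le> k \<Longrightarrow> valid_idx \<sigma> i"
  by (cases \<sigma>) auto

lemma prefix_lpath:
  assumes "is_path V E \<sigma>" "valid_idx \<sigma> k"
  shows "lpath V E (map (at \<sigma>) [0..<Suc k])"
proof -
  have v: "i \<le> k \<Longrightarrow> valid_idx \<sigma> i" for i using valid_mono assms(2) by blast
  show ?thesis using assms(1) v unfolding lpath_def is_path_def successively_conv_nth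
    by (auto simp del: upt_Suc simp: nth_append)
qed

lemma exists_max:
  assumes "E \<subseteq> V \<times> V" "x \<in> V"
  shows "\<exists>\<pi>. maximal_path V E \<pi> \<and> at \<pi> 0 = x"
proof -
  define g where "g m = (if succs E m = {} then m else SOME m'. (m,m') \<in> E)" for m
  define sq where "sq k = (g ^^ k) x" for k
  have sqV: "sq k \<in> V" for k
  proof (induction k)
    case 0 then show ?case using assms by (simp add: sq_def)
  next
    case (Suc k)
    show ?case
    proof (cases "succs E (sq k) = {}")
      case True then show ?thesis using Suc by (simp add: sq_def g_def)
    next
      case False
      then have "(sq k, g (sq k)) \<in> E" unfolding g_def succs_def by (auto intro: someI)
      then show ?thesis using assms(1) by (auto simp: sq_def)
    qed
  qed
  have sqE: "succs E (sq k) \<noteq> {} \<Longrightarrow> (sq k, sq (Suc k)) \<in> E" for k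
    unfolding g_def succs_def sq_def by (auto intro: someI)
  show ?thesis
  proof (cases "\<exists>k. succs E (sq k) = {}")
    case True
    define k0 where "k0 = (LEAST k. succs E (sq k) = {})"
    have k0: "succs E (sq k0) = {}" using True unfolding k0_def by (rule LeastI_ex)
    have lt: "i < k0 \<Longrightarrow> succs E (sq i) \<noteq> {}" for i unfolding k0_def using not_less_Least by blast
    let ?xs = "map sq [0..<Suc k0]"
    have "lpath V E ?xs" unfolding lpath_def successively_conv_nth
      using sqV lt sqE by (auto simp del: upt_Suc)
    moreover have "last ?xs = sq k0" by (simp del: upt_Suc add: last_map)
    ultimately have "maximal_path V E (FinP ?xs)" using k0 by (simp add: maximal_path_def is_path_FinP)
    moreover have "at (FinP ?xs) 0 = x" by (simp del: upt_Suc add: sq_def)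
    ultimately show ?thesis by blast
  next
    case False
    then have "maximal_path V E (InfP sq)" using sqV sqE by (auto simp: maximal_path_def is_path_def)
    moreover have "at (InfP sq) 0 = x" by (simp add: sq_def)
    ultimately show ?thesis by blast
  qed
qed

lemma extend:
  assumes "E \<subseteq> V \<times> V" "lpath V E xs"
  shows "\<exists>\<pi>. maximal_path V E \<pi> \<and> (\<forall>i<length xs. valid_idx \<pi> i \<and> at \<pi> i = xs ! i)"
proof -
  have ne: "xs \<noteq> []" and lV: "last xs \<in> V" using assms(2) by (auto simp: lpath_def)
  obtain \<sigma> where \<sigma>: "maximal_path V E \<sigma>" "at \<sigma> 0 = last xs" using exists_max[OF assms(1) lV] by blast
  have xs: "butlast xs @ [at \<sigma> 0] = xs" using ne \<sigma>(2) by simp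
  have "maximal_path V E (preP (butlast xs) \<sigma>)"
    using preP_max[OF \<sigma>(1), of "butlast xs"] xs assms(2) unfolding lpath_def
    by (metis in_set_butlastD subset_code(1))
  moreover have "valid_idx (preP (butlast xs) \<sigma>) i \<and> at (preP (butlast xs) \<sigma>) i = xs ! i" if "i < length xs" for i
  proof (cases "i < length xs - 1")
    case True then show ?thesis using preP_at1[of i "butlast xs" \<sigma>] by (simp add: nth_butlast)
  next
    case False
    then have i: "i = length (butlast xs) + 0" using that by simp
    have "valid_idx \<sigma> 0" using \<sigma>(1) by (simp add: maximal_path_def is_path_def)
    then show ?thesis using preP_at2[of \<sigma> 0 "butlast xs"] i \<sigma>(2) ne by (simp add: last_conv_nth)
  qed
  ultimately show ?thesis by blast
qed

fun fidx :: "'a list \<Rightarrow> 'a \<Rightarrow> nat" where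
  "fidx [] x = 0"
| "fidx (a # xs) x = (if a = x then 0 else Suc (fidx xs x))"

lemma fidx_props: "x \<in> set xs \<Longrightarrow> fidx xs x < length xs \<and> xs ! fidx xs x = x \<and> (\<forall>i<fidx xs x. xs ! i \<noteq> x)"
proof (induction xs)
  case Nil then show ?case by simp
next
  case (Cons a xs)
  show ?case
  proof (cases "a = x")
    case True then show ?thesis by simp
  next
    case False then show ?thesis using Cons by (auto simp: nth_Cons split: nat.splits)
  qed
qed

lemma fidx_filter:
  assumes "x \<in> set xs" "y \<in> set xs" "P x" "P y"
  shows "fidx (filter P xs) x < fidx (filter P xs) y \<longleftrightarrow> fidx xs x < fidx xs y"
  using assms by (induction xs) auto

lemma first_idx_prefix:
  assumes "\<forall>i<length xs. valid_idx \<pi> i \<and> at \<pi> i = xs ! i" "x \<in> set xs"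
  shows "first_idx \<pi> x = fidx xs x"
proof -
  note f = fidx_props[OF assms(2)]
  show ?thesis unfolding first_idx_def
  proof (rule Least_equality)
    show "valid_idx \<pi> (fidx xs x) \<and> at \<pi> (fidx xs x) = x" using f assms(1) by auto
    fix i assume "valid_idx \<pi> i \<and> at \<pi> i = x"
    then show "fidx xs x \<le> i" using f assms(1) by (metis leI order.strict_trans)
  qed
qed

lemma first_idx_in: "x \<in> pnodes \<pi> \<Longrightarrow> valid_idx \<pi> (first_idx \<pi> x) \<and> at \<pi> (first_idx \<pi> x) = x"
proof -
  assume "x \<in> pnodes \<pi>"
  then obtain i where "valid_idx \<pi> i \<and> at \<pi> i = x" by (auto simp: pnodes_def)
  then show ?thesis unfolding first_idx_def by (rule LeastI)
qed

lemma fo_eq: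
  assumes "W \<subseteq> pnodes \<pi>1" "W \<subseteq> pnodes \<pi>2"
    "\<And>w w'. w \<in> W \<Longrightarrow> w' \<in> W \<Longrightarrow> first_idx \<pi>1 w < first_idx \<pi>1 w' \<longleftrightarrow> first_idx \<pi>2 w < first_idx \<pi>2 w'"
  shows "fo_order W \<pi>1 = fo_order W \<pi>2"
proof -
  have a: "W \<inter> pnodes \<pi>1 = W" "W \<inter> pnodes \<pi>2 = W" using assms(1,2) by auto
  show ?thesis unfolding fo_order_def a using assms(3) by auto
qed



definition AU :: "'a set \<Rightarrow> ('a \<times> 'a) set \<Rightarrow> 'a set \<Rightarrow> ('a \<times> 'a) set" where
  "AU V E U = {(x, y). \<exists>xs. interval V E U xs x y}"

lemma Ap_AU: "Ap_edges V E p = AU V E (Vp V E p)"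
  unfolding Ap_edges_def AU_def ..

lemma AU_iff: "(x, y) \<in> AU V E U \<longleftrightarrow> (\<exists>xs. interval V E U xs x y)"
  by (simp add: AU_def)

lemma interval_mk:
  assumes "lpath V E (x # mid @ [y])" "x \<in> U" "y \<in> U" "\<forall>v\<in>set mid. v \<notin> U"
  shows "(x, y) \<in> AU V E U"
proof -
  have "interval V E U (x # mid @ [y]) x y"
    unfolding interval_def is_path_FinP
  proof (intro conjI allI impI)
    fix i assume i: "0 < i \<and> i < length (x # mid @ [y]) - 1"
    then have "(x # mid @ [y]) ! i = mid ! (i - 1)" by (simp add: nth_append nth_Cons split: nat.splits)
    moreover have "i - 1 < length mid" using i by auto
    ultimately show "(x # mid @ [y]) ! i \<notin> U" using assms(4) by simp
  qed (use assms in auto)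
  then show ?thesis unfolding AU_def by blast
qed

lemma interval_dest:
  assumes "interval V E U xs x y"
  shows "\<exists>mid. xs = x # mid @ [y] \<and> (\<forall>v\<in>set mid. v \<notin> U) \<and> lpath V E xs"
proof -
  have l: "lpath V E xs" "length xs \<ge> 2" "hd xs = x" "last xs = y"
    and int: "\<forall>i. 0 < i \<and> i < length xs - 1 \<longrightarrow> xs ! i \<notin> U"
    using assms unfolding interval_def is_path_FinP by auto
  obtain a rest where xs: "xs = a # rest" using l(2) by (cases xs) auto
  then have rne: "rest \<noteq> []" using l(2) by auto
  define mid where "mid = butlast rest"
  have ly: "last rest = y" using rne l(4) xs by simp
  have r: "rest = mid @ [y]" using append_butlast_last_id[OF rne] unfolding mid_def ly by simp
  have "xs = x # mid @ [y]" using xs r l(3) by simp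
  moreover have "\<forall>v\<in>set mid. v \<notin> U"
  proof
    fix v assume "v \<in> set mid"
    then obtain j where j: "j < length mid" "mid ! j = v" by (auto simp: in_set_conv_nth)
    have "xs ! Suc j = v" using j `xs = x # mid @ [y]` by (simp add: nth_append)
    moreover have "0 < Suc j \<and> Suc j < length xs - 1" using j `xs = x # mid @ [y]` by simp
    ultimately show "v \<notin> U" using int by blast
  qed
  ultimately show ?thesis using l(1) by blast
qed

lemma lpath_appD1: "lpath V E (xs @ ys) \<Longrightarrow> xs \<noteq> [] \<Longrightarrow> lpath V E xs"
  unfolding lpath_def by (auto simp: successively_append_iff)

lemma lpath_appD2: "lpath V E (xs @ ys) \<Longrightarrow> ys \<noteq> [] \<Longrightarrow> lpath V E ys"
  unfolding lpath_def by (auto simp: successively_append_iff)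

lemma lpath_appE: "lpath V E (xs @ ys) \<Longrightarrow> xs \<noteq> [] \<Longrightarrow> ys \<noteq> [] \<Longrightarrow> (last xs, hd ys) \<in> E"
  unfolding lpath_def by (auto simp: successively_append_iff)

lemma lpath_appI: "lpath V E xs \<Longrightarrow> lpath V E ys \<Longrightarrow> (last xs, hd ys) \<in> E \<Longrightarrow> lpath V E (xs @ ys)"
  unfolding lpath_def by (auto simp: successively_append_iff)

lemma proj:
  assumes "lpath V E Q" "hd Q \<in> U" "last Q \<in> U"
  shows "successively (\<lambda>a b. (a, b) \<in> AU V E U) (filter (\<lambda>v. v \<in> U) Q)"
  using assms
proof (induction "length Q" arbitrary: Q rule: less_induct)
  case less
  obtain x rest where Q: "Q = x # rest" using less.prems(1) by (cases Q) (auto simp: lpath_def)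
  show ?case
  proof (cases "rest = []")
    case True then show ?thesis using Q by simp
  next
    case False
    then have "last rest \<in> U" using less.prems(3) Q by simp
    then have "\<exists>v\<in>set rest. v \<in> U" using False by auto
    then obtain mid y R where r: "rest = mid @ y # R" "y \<in> U" "\<forall>v\<in>set mid. v \<notin> U"
      using split_list_first_prop[of rest "\<lambda>v. v \<in> U"] by blast
    have Q2: "Q = (x # mid @ [y]) @ R" using Q r by simp
    have Q3: "Q = (x # mid) @ (y # R)" using Q r by simp
    have l1: "lpath V E (x # mid @ [y])"
      using less.prems(1) unfolding Q2 by (rule lpath_appD1) simp
    have l2: "lpath V E (y # R)"
      using less.prems(1) unfolding Q3 by (rule lpath_appD2) simp
    have xU: "x \<in> U" using less.prems(2) Q by simp
    have A: "(x, y) \<in> AU V E U" using interval_mk[OF l1 xU r(2,3)] .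
    have "successively (\<lambda>a b. (a, b) \<in> AU V E U) (filter (\<lambda>v. v \<in> U) (y # R))"
      using less.hyps[of "y # R"] l2 r(2) less.prems(3) Q r by simp
    moreover have "filter (\<lambda>v. v \<in> U) Q = x # filter (\<lambda>v. v \<in> U) (y # R)"
      using Q r xU by simp
    ultimately show ?thesis using A r(2) by simp
  qed
qed

lemma expand:
  assumes "successively (\<lambda>a b. (a, b) \<in> AU V E U) ys" "ys \<noteq> []" "set ys \<subseteq> U" "U \<subseteq> V"
  shows "\<exists>zs. lpath V E zs \<and> hd zs = hd ys \<and> last zs = last ys \<and> filter (\<lambda>v. v \<in> U) zs = ys"
  using assms
proof (induction ys)
  case Nil then show ?case by simp
next
  case (Cons x ys)
  show ?case
  proof (cases "ys = []")
    case True
    then have "lpath V E [x] \<and> hd [x] = hd (x # ys) \<and> last [x] = last (x # ys) \<and> filter (\<lambda>v. v \<in> U) [x] = x # ys"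
      using Cons.prems by (auto simp: lpath_def)
    then show ?thesis by blast
  next
    case False
    have xy: "(x, hd ys) \<in> AU V E U" and s: "successively (\<lambda>a b. (a, b) \<in> AU V E U) ys"
      using Cons.prems(1) False by (auto simp: successively_Cons)
    have ysU: "set ys \<subseteq> U" using Cons.prems(3) by simp
    from Cons.IH[OF s False ysU Cons.prems(4)]
    obtain zs where zs: "lpath V E zs" "hd zs = hd ys" "last zs = last ys" "filter (\<lambda>v. v \<in> U) zs = ys"
      by blast
    obtain iv where "interval V E U iv x (hd ys)" using xy unfolding AU_iff by blast
    from interval_dest[OF this] obtain mid where m: "iv = x # mid @ [hd ys]" "\<forall>v\<in>set mid. v \<notin> U" "lpath V E iv"
      by blast
    have zne: "zs \<noteq> []" using zs(1) by (simp add: lpath_def)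
    let ?r = "(x # mid) @ zs"
    have "lpath V E ?r"
    proof -
      have m3: "lpath V E ((x # mid) @ [hd ys])" using m(3) m(1) by simp
      have "lpath V E (x # mid)" using lpath_appD1[OF m3] by simp
      moreover have "(last (x # mid), hd zs) \<in> E" using lpath_appE[OF m3] zs(2) by simp
      ultimately show ?thesis using zs(1) lpath_appI by blast
    qed
    moreover have "last ?r = last (x # ys)" using zs(3) zne False by simp
    moreover have "filter (\<lambda>v. v \<in> U) ?r = x # ys" using zs(4) m(2) Cons.prems(3) by auto
    ultimately show ?thesis by (metis list.sel(1) append_Cons)
  qed
qed



lemma pnodes_InfP[simp]: "pnodes (InfP f) = range f"
  unfolding pnodes_def by auto

lemma preP_hd: "L \<noteq> [] \<Longrightarrow> valid_idx \<sigma> 0 \<Longrightarrow> at \<sigma> 0 = last L \<Longrightarrow> at (preP (butlast L) \<sigma>) 0 = hd L"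
proof (cases "butlast L = []")
  case True
  assume "L \<noteq> []" "valid_idx \<sigma> 0" "at \<sigma> 0 = last L"
  moreover have "L = [last L]" using True `L \<noteq> []` by (metis append_butlast_last_id append_Nil)
  ultimately show ?thesis using preP_at2[of \<sigma> 0 "butlast L"] True by (metis list.sel(1) list.size(3) add_0)
next
  case False
  assume "L \<noteq> []"
  have "0 < length (butlast L)" using False by blast
  then have "at (preP (butlast L) \<sigma>) 0 = butlast L ! 0" using preP_at1[of 0 "butlast L" \<sigma>] by blast
  also have "\<dots> = hd L" using False `L \<noteq> []` \<open>0 < length (butlast L)\<close> by (simp add: hd_conv_nth nth_butlast del: length_butlast)
  finally show ?thesis .
qed

lemma prefix_pnodes: "\<forall>i<length xs. valid_idx \<pi> i \<and> at \<pi> i = xs ! i \<Longrightarrow> set xs \<subseteq> pnodes \<pi>"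
  unfolding pnodes_def by (auto simp: in_set_conv_nth) (metis)

lemma lasso:
  assumes L: "lpath V E L" and C: "lpath V E C" "length C \<ge> 2" "hd C = last L" "last C = last L"
  shows "\<exists>\<pi>. maximal_path V E \<pi> \<and> at \<pi> 0 = hd L \<and> pnodes \<pi> \<subseteq> set L \<union> set C"
proof -
  define m where "m = length C - 1"
  have m: "m \<ge> 1" "m < length C" using C(2) unfolding m_def by auto
  define cyc where "cyc k = C ! (k mod m)" for k
  have cycC: "cyc k \<in> set C" for k unfolding cyc_def using m by (metis nth_mem order.strict_trans mod_less_divisor less_le_trans zero_less_one)
  have CV: "set C \<subseteq> V" using C(1) by (simp add: lpath_def)
  have Cs: "Suc j < length C \<Longrightarrow> (C ! j, C ! Suc j) \<in> E" for j
    using C(1) unfolding lpath_def by (auto intro: successively_nth)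
  have Cne: "C \<noteq> []" using C(1) by (simp add: lpath_def)
  have cycE: "(cyc k, cyc (Suc k)) \<in> E" for k
  proof (cases "Suc (k mod m) < m")
    case True
    then have "Suc k mod m = Suc (k mod m)" by (simp add: mod_Suc)
    then show ?thesis unfolding cyc_def using Cs[of "k mod m"] True m by simp
  next
    case False
    have "k mod m < m" using m by simp
    then have e: "Suc (k mod m) = m" using False by simp
    then have "Suc k mod m = 0" by (simp add: mod_Suc)
    moreover have "C ! m = C ! 0"
      using C(3,4) Cne unfolding m_def by (simp add: hd_conv_nth last_conv_nth)
    ultimately show ?thesis unfolding cyc_def using Cs[of "k mod m"] e m by simp
  qed
  have cyc0: "cyc 0 = last L" unfolding cyc_def using C(3) Cne by (simp add: hd_conv_nth)
  have mc: "maximal_path V E (InfP cyc)" using cycE cycC CV by (auto simp: maximal_path_def is_path_def)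
  have Lne: "L \<noteq> []" using L by (simp add: lpath_def)
  have Lb: "butlast L @ [at (InfP cyc) 0] = L" using cyc0 Lne by simp
  have "maximal_path V E (preP (butlast L) (InfP cyc))"
    apply (rule preP_max[OF mc])
    using L Lb unfolding lpath_def by (auto dest: in_set_butlastD)
  moreover have "at (preP (butlast L) (InfP cyc)) 0 = hd L" by (rule preP_hd[OF Lne]) (simp_all add: cyc0)
  moreover have "pnodes (preP (butlast L) (InfP cyc)) \<subseteq> set L \<union> set C"
    unfolding preP_pnodes using cycC by (auto dest: in_set_butlastD)
  ultimately show ?thesis by blast
qed

lemma visits:
  assumes "p \<in> V" "(p, s) \<in> E" "maximal_path V E \<pi>" "at \<pi> 0 = s"
  shows "Vp V E p - {p} \<subseteq> pnodes \<pi>"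
proof -
  have "maximal_path V E (preP [p] \<pi>)"
    using preP_max[OF assms(3), of "[p]"] assms by simp
  moreover have "at (preP [p] \<pi>) 0 = p" using preP_at1[of 0 "[p]" \<pi>] by simp
  ultimately have "Vp V E p \<subseteq> pnodes (preP [p] \<pi>)" unfolding Vp_def by blast
  then show ?thesis unfolding preP_pnodes by auto
qed

lemma exp2:
  assumes sp: "lpath V E sp" "hd sp = s" "last sp = hd ys" "\<forall>x\<in>set (butlast sp). x \<notin> U"
    and ys: "successively (\<lambda>a b. (a, b) \<in> AU V E U) ys" "ys \<noteq> []" "set ys \<subseteq> U" "U \<subseteq> V"
  shows "\<exists>L. lpath V E L \<and> hd L = s \<and> last L = last ys \<and> filter (\<lambda>v. v \<in> U) L = ys"
proof -
  obtain zs where zs: "lpath V E zs" "hd zs = hd ys" "last zs = last ys" "filter (\<lambda>v. v \<in> U) zs = ys"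
    using expand[OF ys] by blast
  have spne: "sp \<noteq> []" using sp(1) by (simp add: lpath_def)
  have spd: "sp = butlast sp @ [hd ys]" using append_butlast_last_id[OF spne] sp(3) by simp
  have fz: "filter (\<lambda>v. v \<in> U) (butlast sp @ zs) = ys" using zs(4) sp(4) by simp
  show ?thesis
  proof (cases "butlast sp = []")
    case True
    then have "hd zs = s" using spd sp(2) zs(2) by (metis append_Nil list.sel(1))
    then show ?thesis using zs fz True by auto
  next
    case False
    have l1: "lpath V E (butlast sp)" using lpath_appD1[of V E "butlast sp" "[hd ys]"] sp(1) spd False by simp
    have e: "(last (butlast sp), hd zs) \<in> E" using lpath_appE[of V E "butlast sp" "[hd ys]"] sp(1) spd False zs(2) by simp
    have "lpath V E (butlast sp @ zs)" using lpath_appI[OF l1 zs(1) e] .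
    moreover have "hd (butlast sp @ zs) = s" using False sp(2) spd by (metis hd_append)
    moreover have "last (butlast sp @ zs) = last ys" using zs(3) zs(1) by (simp add: lpath_def)
    ultimately show ?thesis using fz by blast
  qed
qed



lemma map_split_last: "0 < k \<Longrightarrow> map f [0..<Suc k] = f 0 # map f [Suc 0..<k] @ [f k]"
  by (simp add: upt_conv_Cons)

lemma covers:
  assumes V: "finite V" "E \<subseteq> V \<times> V" and p: "p \<in> V" "(p, s) \<in> E"
    and rho: "maximal_path (Vp V E p) (AU V E (Vp V E p)) \<rho>" "at \<rho> 0 \<in> Vi V E p s"
  shows "Vp V E p - {p} \<subseteq> pnodes \<rho>"
proof -
  let ?U = "Vp V E p"
  let ?A = "AU V E ?U"
  have UV: "?U \<subseteq> V" unfolding Vp_def by auto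
  obtain sp where sp: "lpath V E sp" "hd sp = s" "last sp = at \<rho> 0" "\<forall>x\<in>set (butlast sp). x \<notin> ?U"
    using rho(2) unfolding Vi_def is_path_FinP by blast
  show ?thesis
  proof (cases \<rho>)
    case (FinP ys)
    have ys: "lpath ?U ?A ys" "succs ?A (last ys) = {}"
      using rho(1) FinP by (auto simp: maximal_path_def is_path_FinP)
    have yne: "ys \<noteq> []" using ys(1) by (simp add: lpath_def)
    have hy: "hd ys = at \<rho> 0" using FinP yne by (simp add: hd_conv_nth)
    obtain L where L: "lpath V E L" "hd L = s" "last L = last ys" "filter (\<lambda>v. v \<in> ?U) L = ys"
      using exp2[OF sp(1,2) _ sp(4), of ys] ys(1) UV hy sp(3) unfolding lpath_def by auto
    have Lne: "L \<noteq> []" using L(1) by (simp add: lpath_def)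
    have yV: "last ys \<in> V" using ys(1) yne UV unfolding lpath_def by (meson last_in_set subsetD)
    obtain \<sigma> where \<sigma>: "maximal_path V E \<sigma>" "at \<sigma> 0 = last ys" using exists_max[OF V(2) yV] by blast
    have v0: "valid_idx \<sigma> 0" using \<sigma>(1) by (simp add: maximal_path_def is_path_def)
    have Lb: "butlast L @ [at \<sigma> 0] = L" using \<sigma>(2) L(3) append_butlast_last_id[OF Lne] by simp
    have mp: "maximal_path V E (preP (butlast L) \<sigma>)"
      apply (rule preP_max[OF \<sigma>(1)])
      using L(1) Lb unfolding lpath_def by (auto dest: in_set_butlastD)
    have h0: "at (preP (butlast L) \<sigma>) 0 = s" using preP_hd[OF Lne v0] \<sigma>(2) L(2,3) by simp
    have cov: "?U - {p} \<subseteq> set (butlast L) \<union> pnodes \<sigma>"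
      using visits[OF p mp h0] unfolding preP_pnodes .
    have noU: "\<not> (valid_idx \<sigma> k \<and> 0 < k \<and> at \<sigma> k \<in> ?U)" for k
    proof
      assume "valid_idx \<sigma> k \<and> 0 < k \<and> at \<sigma> k \<in> ?U"
      then have ex: "\<exists>k. valid_idx \<sigma> k \<and> 0 < k \<and> at \<sigma> k \<in> ?U" by blast
      define k0 where "k0 = (LEAST k. valid_idx \<sigma> k \<and> 0 < k \<and> at \<sigma> k \<in> ?U)"
      have k0: "valid_idx \<sigma> k0 \<and> 0 < k0 \<and> at \<sigma> k0 \<in> ?U" using LeastI_ex[OF ex] unfolding k0_def .
      have lt: "0 < i \<Longrightarrow> i < k0 \<Longrightarrow> at \<sigma> i \<notin> ?U" for i
        using not_less_Least[of i "\<lambda>k. valid_idx \<sigma> k \<and> 0 < k \<and> at \<sigma> k \<in> ?U"] k0 valid_mono[of \<sigma> k0 i]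
        unfolding k0_def[symmetric] by auto
      have lp: "lpath V E (map (at \<sigma>) [0..<Suc k0])"
        using prefix_lpath[OF _ conjunct1[OF k0]] \<sigma>(1) by (simp add: maximal_path_def)
      have "(at \<sigma> 0, at \<sigma> k0) \<in> ?A"
      proof (rule interval_mk[where mid = "map (at \<sigma>) [Suc 0..<k0]"])
        show "lpath V E (at \<sigma> 0 # map (at \<sigma>) [Suc 0..<k0] @ [at \<sigma> k0])"
          using lp map_split_last[of k0 "at \<sigma>"] k0 by simp
        show "at \<sigma> 0 \<in> ?U" using \<sigma>(2) ys(1) yne unfolding lpath_def by (metis last_in_set subsetD)
        show "at \<sigma> k0 \<in> ?U" using k0 by simp
        show "\<forall>v\<in>set (map (at \<sigma>) [Suc 0..<k0]). v \<notin> ?U" using lt by auto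
      qed
      then show False using ys(2) \<sigma>(2) by (simp add: succs_def)
    qed
    show ?thesis
    proof
      fix z assume z: "z \<in> ?U - {p}"
      from cov z have "z \<in> set (butlast L) \<or> z \<in> pnodes \<sigma>" by blast
      then have "z \<in> set ys"
      proof
        assume "z \<in> set (butlast L)"
        then have "z \<in> set (filter (\<lambda>v. v \<in> ?U) L)" using z by (auto dest: in_set_butlastD)
        then show ?thesis using L(4) by simp
      next
        assume "z \<in> pnodes \<sigma>"
        then obtain k where k: "valid_idx \<sigma> k" "z = at \<sigma> k" by (auto simp: pnodes_def)
        then have "k = 0" using noU[of k] z by auto
        then show ?thesis using k \<sigma>(2) yne by simp
      qed
      then show "z \<in> pnodes \<rho>" using FinP by simp
    qed
  next
    case (InfP f)
    have fU: "f k \<in> ?U" and fA: "(f k, f (Suc k)) \<in> ?A" for k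
      using rho(1) InfP by (auto simp: maximal_path_def is_path_def)
    have "finite ?U" using V(1) UV finite_subset by blast
    then have "finite (range f)" using fU by (meson finite_subset image_subsetI)
    then have "\<not> inj f" using finite_imageD infinite_UNIV_nat by blast
    then obtain i j where ij: "i < j" "f i = f j"
      unfolding inj_def by (metis linorder_neqE_nat)
    have isp: "is_path ?U ?A \<rho>" using rho(1) by (simp add: maximal_path_def)
    let ?ys1 = "map f [0..<Suc j]"
    have atf: "at \<rho> = f" using InfP by (intro ext) simp
    have l1: "lpath ?U ?A ?ys1" using prefix_lpath[OF isp, of j] InfP atf by simp
    obtain L where L: "lpath V E L" "hd L = s" "last L = last ?ys1" "filter (\<lambda>v. v \<in> ?U) L = ?ys1"
    proof -
      have h1: "last sp = hd ?ys1" using sp(3) InfP by (simp add: upt_conv_Cons del: upt_Suc)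
      have l1': "successively (\<lambda>a b. (a, b) \<in> ?A) ?ys1" "?ys1 \<noteq> []" "set ?ys1 \<subseteq> ?U"
        using l1 unfolding lpath_def by auto
      show ?thesis using exp2[OF sp(1,2) h1 sp(4) l1' UV] that by blast
    qed
    let ?ys2 = "drop i ?ys1"
    have d: "?ys1 = take i ?ys1 @ ?ys2" by (rule append_take_drop_id[symmetric])
    have ne2: "?ys2 \<noteq> []" using ij by simp
    have l2: "lpath ?U ?A ?ys2" using lpath_appD2[of ?U ?A "take i ?ys1" ?ys2] l1 d ne2 by metis
    obtain C where C: "lpath V E C" "hd C = hd ?ys2" "last C = last ?ys2" "filter (\<lambda>v. v \<in> ?U) C = ?ys2"
      using expand[of V E ?U ?ys2] l2 UV unfolding lpath_def by auto
    have len: "length ?ys2 \<ge> 2" using ij by simp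
    have "length C \<ge> 2" using len C(4) length_filter_le[of "\<lambda>v. v \<in> ?U" C] by simp
    moreover have "hd C = last L" using C(2) L(3) ij by (simp add: hd_drop_conv_nth last_map del: upt_Suc)
    moreover have "last C = last L" using C(3) L(3) ne2 by (simp add: last_drop del: upt_Suc)
    ultimately obtain \<pi> where \<pi>: "maximal_path V E \<pi>" "at \<pi> 0 = hd L" "pnodes \<pi> \<subseteq> set L \<union> set C"
      using lasso[OF L(1) C(1)] by blast
    have "?U - {p} \<subseteq> pnodes \<pi>" using visits[OF p \<pi>(1)] \<pi>(2) L(2) by simp
    show ?thesis
    proof
      fix z assume z: "z \<in> ?U - {p}"
      then have "z \<in> set L \<union> set C" using \<open>?U - {p} \<subseteq> pnodes \<pi>\<close> \<pi>(3) by blast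
      then have "z \<in> set (filter (\<lambda>v. v \<in> ?U) L) \<union> set (filter (\<lambda>v. v \<in> ?U) C)" using z by auto
      then have "z \<in> set ?ys1" using L(4) C(4) by (auto dest: in_set_dropD)
      then show "z \<in> pnodes \<rho>" using InfP by auto
    qed
  qed
qed



theorem lemma4p9:
  fixes V :: "'a set" and E :: "('a \<times> 'a) set" and p s1 s2 s :: 'a
  assumes "cfg V E"
    and "p \<in> V"
    and "s1 \<noteq> s2" and "succs E p = {s1, s2}"
    and "card (succs (Ap_edges V E p) p) \<ge> 2"
    and "s \<in> {s1, s2}"
  shows "(\<forall>\<pi>. maximal_path V E \<pi> \<and> at \<pi> 0 = s \<longrightarrow>
            (\<exists>\<rho>. maximal_path (Vp V E p) (Ap_edges V E p) \<rho> \<and> at \<rho> 0 \<in> Vi V E p s \<and>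
                 fo_order (Vp V E p - {p}) \<rho> = fo_order (Vp V E p - {p}) \<pi>))
       \<and> (\<forall>\<rho>. maximal_path (Vp V E p) (Ap_edges V E p) \<rho> \<and> at \<rho> 0 \<in> Vi V E p s \<longrightarrow>
            (\<exists>\<pi>. maximal_path V E \<pi> \<and> at \<pi> 0 = s \<and>
                 fo_order (Vp V E p - {p}) \<pi> = fo_order (Vp V E p - {p}) \<rho>))"
proof -
  let ?U = "Vp V E p"
  let ?A = "AU V E ?U"
  let ?W = "?U - {p}"
  have V: "finite V" "E \<subseteq> V \<times> V" using assms(1) unfolding cfg_def by auto
  have ps: "(p, s) \<in> E" using assms(4,6) unfolding succs_def by auto
  have UV: "?U \<subseteq> V" unfolding Vp_def by auto
  have finW: "finite ?W" using V(1) UV finite_subset by blast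
  have AUU: "?A \<subseteq> ?U \<times> ?U" unfolding AU_def interval_def by auto
  have Ap: "Ap_edges V E p = ?A" by (rule Ap_AU)
  have "\<exists>w. w \<in> ?W"
  proof -
    have "succs ?A p \<subseteq> ?U" using AUU unfolding succs_def by auto
    moreover have "\<not> succs ?A p \<subseteq> {p}"
    proof
      assume "succs ?A p \<subseteq> {p}"
      then have "card (succs ?A p) \<le> card {p}" by (intro card_mono) auto
      then show False using assms(5) Ap by simp
    qed
    ultimately show ?thesis by blast
  qed
  then obtain w0 where w0: "w0 \<in> ?W" by blast
  show ?thesis
  proof (intro conjI allI impI)
    fix \<pi> assume "maximal_path V E \<pi> \<and> at \<pi> 0 = s"
    then have \<pi>: "maximal_path V E \<pi>" "at \<pi> 0 = s" by auto
    have isp: "is_path V E \<pi>" using \<pi>(1) by (simp add: maximal_path_def)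
    have Wp: "?W \<subseteq> pnodes \<pi>" using visits[OF assms(2) ps \<pi>] .
    have ex: "\<exists>k. valid_idx \<pi> k \<and> at \<pi> k \<in> ?U"
    proof -
      have "w0 \<in> pnodes \<pi>" using w0 Wp by blast
      then have "valid_idx \<pi> (first_idx \<pi> w0) \<and> at \<pi> (first_idx \<pi> w0) \<in> ?U"
        using first_idx_in[of w0 \<pi>] w0 by simp
      then show ?thesis by blast
    qed
    define k where "k = (LEAST k. valid_idx \<pi> k \<and> at \<pi> k \<in> ?U)"
    have k: "valid_idx \<pi> k" "at \<pi> k \<in> ?U" using LeastI_ex[OF ex] unfolding k_def by auto
    have ltk: "i < k \<Longrightarrow> at \<pi> i \<notin> ?U" for i
      using not_less_Least[of i "\<lambda>k. valid_idx \<pi> k \<and> at \<pi> k \<in> ?U"] valid_mono[OF k(1), of i]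
      unfolding k_def[symmetric] by auto
    define N where "N = Max (insert k (first_idx \<pi> ` ?W))"
    have Nin: "N \<in> insert k (first_idx \<pi> ` ?W)" unfolding N_def using finW by (intro Max_in) auto
    have Nge: "k \<le> N" "\<And>w. w \<in> ?W \<Longrightarrow> first_idx \<pi> w \<le> N" unfolding N_def using finW by auto
    have NvU: "valid_idx \<pi> N \<and> at \<pi> N \<in> ?U"
    proof -
      have "N = k \<or> (\<exists>w\<in>?W. N = first_idx \<pi> w)" using Nin by auto
      then show ?thesis
      proof
        assume "\<exists>w\<in>?W. N = first_idx \<pi> w"
        then obtain w where w: "w \<in> ?W" "N = first_idx \<pi> w" by blast
        then have "w \<in> pnodes \<pi>" using Wp by blast
        then show ?thesis using first_idx_in[of w \<pi>] w by simp
      qed (use k in simp)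
    qed
    define P where "P = map (at \<pi>) [0..<Suc N]"
    have lP: "lpath V E P" unfolding P_def using prefix_lpath[OF isp] NvU by blast
    have preP: "\<forall>i<length P. valid_idx \<pi> i \<and> at \<pi> i = P ! i"
      unfolding P_def using valid_mono[of \<pi> N] NvU by (auto simp del: upt_Suc simp add: less_Suc_eq_le)
    have WP: "?W \<subseteq> set P"
    proof
      fix w assume w: "w \<in> ?W"
      then have "first_idx \<pi> w < length P" using Nge(2)[OF w] unfolding P_def by simp
      then show "w \<in> set P" using preP first_idx_in[of w \<pi>] Wp w by (metis nth_mem subsetD)
    qed
    define Q where "Q = drop k P"
    have Q: "Q = at \<pi> k # map (at \<pi>) [Suc k..<Suc N]" unfolding Q_def P_def drop_map drop_upt using Nge(1)
      by (simp add: upt_conv_Cons del: upt_Suc)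
    have tk: "filter (\<lambda>v. v \<in> ?U) (take k P) = []"
      unfolding P_def using ltk Nge(1) by (auto simp: take_map simp del: upt_Suc)
    have fPQ: "filter (\<lambda>v. v \<in> ?U) P = filter (\<lambda>v. v \<in> ?U) Q"
      using tk unfolding Q_def by (metis append_take_drop_id filter_append self_append_conv2)
    have lQ: "lpath V E Q"
    proof (cases "k = 0")
      case True then show ?thesis using lP unfolding Q_def by simp
    next
      case False
      have "lpath V E (take k P @ Q)" unfolding Q_def using lP by simp
      moreover have "Q \<noteq> []" using Q by simp
      ultimately show ?thesis by (rule lpath_appD2)
    qed
    have lastQ: "last Q = at \<pi> N"
    proof -
      have "last Q = last P" unfolding Q_def using Nge(1) by (simp add: last_drop P_def del: upt_Suc)
      also have "last P = at \<pi> N" unfolding P_def by simp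
      finally show ?thesis .
    qed
    define ys where "ys = filter (\<lambda>v. v \<in> ?U) P"
    have ys: "ys = at \<pi> k # filter (\<lambda>v. v \<in> ?U) (map (at \<pi>) [Suc k..<Suc N])"
      unfolding ys_def fPQ Q using k by simp
    have sy: "successively (\<lambda>a b. (a, b) \<in> ?A) ys"
      unfolding ys_def fPQ using proj[OF lQ] Q lastQ k NvU by simp
    have yne: "ys \<noteq> []" using ys by (simp del: upt_Suc)
    have ysU: "set ys \<subseteq> ?U" unfolding ys_def by auto
    have lys: "lpath ?U ?A ys" unfolding lpath_def using sy yne ysU by blast
    obtain \<rho> where \<rho>: "maximal_path ?U ?A \<rho>" "\<forall>i<length ys. valid_idx \<rho> i \<and> at \<rho> i = ys ! i"
      using extend[OF AUU lys] by blast
    have r0: "at \<rho> 0 = at \<pi> k" using \<rho>(2) ys by auto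
    have Vi: "at \<pi> k \<in> Vi V E p s"
    proof -
      let ?sp = "map (at \<pi>) [0..<Suc k]"
      have "lpath V E ?sp" using prefix_lpath[OF isp k(1)] .
      moreover have "hd ?sp = s" using \<pi>(2) by (simp add: upt_conv_Cons del: upt_Suc)
      moreover have "last ?sp = at \<pi> k" by simp
      moreover have "\<forall>x\<in>set (butlast ?sp). x \<notin> ?U" using ltk by simp
      ultimately show ?thesis unfolding Vi_def is_path_FinP using k(2) by blast
    qed
    have Wr: "?W \<subseteq> pnodes \<rho>" using WP prefix_pnodes[OF \<rho>(2)] unfolding ys_def by auto
    have "fo_order ?W \<rho> = fo_order ?W \<pi>"
    proof (rule fo_eq[OF Wr Wp])
      fix w w' assume ww: "w \<in> ?W" "w' \<in> ?W"
      then have inys: "w \<in> set ys" "w' \<in> set ys" using WP unfolding ys_def by auto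
      have "first_idx \<rho> w = fidx ys w" "first_idx \<rho> w' = fidx ys w'"
        using first_idx_prefix[OF \<rho>(2)] inys by auto
      moreover have "first_idx \<pi> w = fidx P w" "first_idx \<pi> w' = fidx P w'"
        using first_idx_prefix[OF preP] WP ww by auto
      ultimately show "first_idx \<rho> w < first_idx \<rho> w' \<longleftrightarrow> first_idx \<pi> w < first_idx \<pi> w'"
        unfolding ys_def using fidx_filter[of w P w' "\<lambda>v. v \<in> ?U"] WP ww by auto
    qed
    then show "\<exists>\<rho>. maximal_path ?U (Ap_edges V E p) \<rho> \<and> at \<rho> 0 \<in> Vi V E p s \<and>
                 fo_order ?W \<rho> = fo_order ?W \<pi>"
      using \<rho>(1) r0 Vi Ap by metis
  next
    fix \<rho> assume "maximal_path ?U (Ap_edges V E p) \<rho> \<and> at \<rho> 0 \<in> Vi V E p s"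
    then have \<rho>: "maximal_path ?U ?A \<rho>" "at \<rho> 0 \<in> Vi V E p s" using Ap by auto
    have isp: "is_path ?U ?A \<rho>" using \<rho>(1) by (simp add: maximal_path_def)
    have Wr: "?W \<subseteq> pnodes \<rho>" using covers[OF V assms(2) ps \<rho>] .
    define N where "N = Max (insert 0 (first_idx \<rho> ` ?W))"
    have Nin: "N \<in> insert 0 (first_idx \<rho> ` ?W)" unfolding N_def using finW by (intro Max_in) auto
    have Nge: "\<And>w. w \<in> ?W \<Longrightarrow> first_idx \<rho> w \<le> N" unfolding N_def using finW by auto
    have v0: "valid_idx \<rho> 0" using isp by (simp add: is_path_def)
    have Nv: "valid_idx \<rho> N"
    proof -
      have "N = 0 \<or> (\<exists>w\<in>?W. N = first_idx \<rho> w)" using Nin by auto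
      then show ?thesis
      proof
        assume "\<exists>w\<in>?W. N = first_idx \<rho> w"
        then obtain w where w: "w \<in> ?W" "N = first_idx \<rho> w" by blast
        then have "w \<in> pnodes \<rho>" using Wr by blast
        then show ?thesis using first_idx_in[of w \<rho>] w by simp
      qed (use v0 in simp)
    qed
    define ys where "ys = map (at \<rho>) [0..<Suc N]"
    have lys: "lpath ?U ?A ys" unfolding ys_def using prefix_lpath[OF isp Nv] .
    have preys: "\<forall>i<length ys. valid_idx \<rho> i \<and> at \<rho> i = ys ! i"
      unfolding ys_def using valid_mono[of \<rho> N] Nv by (auto simp del: upt_Suc simp add: less_Suc_eq_le)
    have Wys: "?W \<subseteq> set ys"
    proof
      fix w assume w: "w \<in> ?W"
      then have "first_idx \<rho> w < length ys" using Nge[OF w] unfolding ys_def by simp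
      then show "w \<in> set ys" using preys first_idx_in[of w \<rho>] Wr w by (metis nth_mem subsetD)
    qed
    obtain sp where sp: "lpath V E sp" "hd sp = s" "last sp = at \<rho> 0" "\<forall>x\<in>set (butlast sp). x \<notin> ?U"
      using \<rho>(2) unfolding Vi_def is_path_FinP by blast
    have h1: "last sp = hd ys" using sp(3) unfolding ys_def by (simp add: upt_conv_Cons del: upt_Suc)
    have l1': "successively (\<lambda>a b. (a, b) \<in> ?A) ys" "ys \<noteq> []" "set ys \<subseteq> ?U"
      using lys unfolding lpath_def by auto
    obtain L where L: "lpath V E L" "hd L = s" "last L = last ys" "filter (\<lambda>v. v \<in> ?U) L = ys"
      using exp2[OF sp(1,2) h1 sp(4) l1' UV] by blast
    obtain \<pi> where \<pi>: "maximal_path V E \<pi>" "\<forall>i<length L. valid_idx \<pi> i \<and> at \<pi> i = L ! i"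
      using extend[OF V(2) L(1)] by blast
    have Lne: "L \<noteq> []" using L(1) by (simp add: lpath_def)
    have p0: "at \<pi> 0 = s" using \<pi>(2) Lne L(2) by (simp add: hd_conv_nth)
    have WL: "?W \<subseteq> set L" using Wys L(4) by (metis filter_is_subset order_trans)
    have Wp: "?W \<subseteq> pnodes \<pi>" using WL prefix_pnodes[OF \<pi>(2)] by auto
    have "fo_order ?W \<pi> = fo_order ?W \<rho>"
    proof (rule fo_eq[OF Wp Wr])
      fix w w' assume ww: "w \<in> ?W" "w' \<in> ?W"
      have "first_idx \<rho> w = fidx ys w" "first_idx \<rho> w' = fidx ys w'"
        using first_idx_prefix[OF preys] Wys ww by auto
      moreover have "first_idx \<pi> w = fidx L w" "first_idx \<pi> w' = fidx L w'"
        using first_idx_prefix[OF \<pi>(2)] WL ww by auto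
      ultimately show "first_idx \<pi> w < first_idx \<pi> w' \<longleftrightarrow> first_idx \<rho> w < first_idx \<rho> w'"
        using fidx_filter[of w L w' "\<lambda>v. v \<in> ?U"] WL ww L(4) by auto
    qed
    then show "\<exists>\<pi>. maximal_path V E \<pi> \<and> at \<pi> 0 = s \<and> fo_order ?W \<pi> = fo_order ?W \<rho>"
      using \<pi>(1) p0 by blast
  qed
qed

end
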